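(* Let $\Delta=\{|\zeta|\le1\}$, $\Gamma=\{|\zeta|=1\}$. Let $\varphi$ be a continuous complex-valued function on $\Delta\setminus\{0\}$ which is holomorphic on $\{0<|\zeta|<1\}$ and has either a pole or a removable singularity at $\zeta=0$. Let $\gamma=\{(\zeta,\varphi(\zeta)):\zeta\in\Gamma\}\subset\mathbb{C}^2$ and $\Sigma=\{(\zeta,\varphi(\zeta)):\zeta\in\Delta\setminus\{0\}\}\subset\mathbb{C}^2$. Then $\Sigma\subset\widehat{\gamma}$, where $\widehat\gamma$ is the projective hull of $\gamma$.
   Context: For a compact set $X\subset\mathbb{C}^n$, let $\mathcal{P}_d$ denote the space of complex polynomials on $\mathbb{C}^n$ of degree at most $d$. The projective hull $\widehat X$ of $X$ is the set of points $x\in\mathbb{C}^n$ for which there exists a constant $C_x$ such that $|P(x)|\le (C_x)^d\sup_X|P|$ for all $P\in\mathcal{P}_d$ and all $d\ge0$. *)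

theory Defs
  imports "HOL-Complex_Analysis.Complex_Analysis"
begin

definition polys2 :: "nat \<Rightarrow> (complex \<times> complex \<Rightarrow> complex) set" where
  "polys2 d = {P. \<exists>c :: nat \<Rightarrow> nat \<Rightarrow> complex.
      P = (\<lambda>(z, w). \<Sum>i\<le>d. \<Sum>j\<le>d - i. c i j * z ^ i * w ^ j)}"

definition proj_hull :: "(complex \<times> complex) set \<Rightarrow> (complex \<times> complex) set" where
  "proj_hull X = {x. \<exists>C :: real. \<forall>d. \<forall>P \<in> polys2 d.
      norm (P x) \<le> C ^ d * (SUP y\<in>X. norm (P y))}"

end

theory Submission
  imports Defs
begin

lemma ext_cont:
  fixes \<phi> :: "complex \<Rightarrow> complex"
  assumes cont: "continuous_on (cball 0 1 - {0}) \<phi>"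
    and lim: "((\<lambda>z. z ^ m * \<phi> z) \<longlongrightarrow> L) (at 0)"
  defines "h \<equiv> (\<lambda>z. if z = 0 then L else z ^ m * \<phi> z)"
  shows "continuous_on (cball 0 1) h"
proof -
  have c2: "continuous_on (cball 0 1 - {0}) (\<lambda>z. z ^ m * \<phi> z)"
    by (rule continuous_on_mult[OF continuous_on_power[OF continuous_on_id] cont])
  have hl: "(h \<longlongrightarrow> L) (at 0)"
  proof -
    have "eventually (\<lambda>z. z ^ m * \<phi> z = h z) (at 0)"
      unfolding eventually_at by (intro exI[of _ 1]) (simp add: h_def)
    then show ?thesis using lim by (rule tendsto_cong[THEN iffD1])
  qed
  show ?thesis
    unfolding continuous_on_eq_continuous_within
  proof
    fix x :: complex assume x: "x \<in> cball 0 1"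
    show "continuous (at x within cball 0 1) h"
    proof (cases "x = 0")
      case True
      have "(h \<longlongrightarrow> L) (at 0 within cball 0 1)"
        by (rule tendsto_within_subset[OF hl]) simp
      then show ?thesis unfolding continuous_within using True by (simp add: h_def)
    next
      case False
      have "continuous (at x within cball 0 1 - {0}) (\<lambda>z. z ^ m * \<phi> z)"
      proof -
        have xin: "x \<in> cball 0 1 - {0}" using x False by simp
        show ?thesis using c2 xin unfolding continuous_on_eq_continuous_within by (rule bspec)
      qed
      then have t: "((\<lambda>z. z ^ m * \<phi> z) \<longlongrightarrow> h x) (at x within cball 0 1 - {0})"
        using False by (simp add: continuous_within h_def)
      have e: "at x within cball 0 1 - {0} = at x within cball 0 1"
      proof (rule at_within_nhd[of _ "- {0}"])
        show "x \<in> - {0}" using False by simp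
        show "open (- {0::complex})" by (simp add: open_Compl)
        show "(cball 0 1 - {0}) \<inter> - {0} - {x} = cball 0 1 \<inter> - {0} - {x}" by blast
      qed
      have "eventually (\<lambda>z. z ^ m * \<phi> z = h z) (at x within cball 0 1 - {0})"
        unfolding eventually_at_filter by (rule always_eventually) (simp add: h_def)
      then have "(h \<longlongrightarrow> h x) (at x within cball 0 1 - {0})"
        using t by (rule tendsto_cong[THEN iffD1])
      then show ?thesis unfolding continuous_within e .
    qed
  qed
qed

lemma ext_holo:
  fixes \<phi> :: "complex \<Rightarrow> complex"
  assumes cont: "continuous_on (cball 0 1 - {0}) \<phi>"
    and holo: "\<phi> holomorphic_on (ball 0 1 - {0})"
    and lim: "((\<lambda>z. z ^ m * \<phi> z) \<longlongrightarrow> L) (at 0)"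
  defines "h \<equiv> (\<lambda>z. if z = 0 then L else z ^ m * \<phi> z)"
  shows "h holomorphic_on ball 0 1"
proof (rule no_isolated_singularity'[where K = "{0}"])
  have c: "continuous_on (cball 0 1) h" unfolding h_def by (rule ext_cont[OF cont lim])
  fix z :: complex assume "z \<in> {0}"
  then show "(h \<longlongrightarrow> h z) (at z within ball 0 1)"
  proof -
    have "z = 0" using \<open>z \<in> {0}\<close> by simp
    have "continuous (at z within cball 0 1) h"
    proof -
      have "z \<in> cball 0 1" using \<open>z = 0\<close> by simp
      then show ?thesis using c unfolding continuous_on_eq_continuous_within by (rule bspec[rotated])
    qed
    then have "(h \<longlongrightarrow> h z) (at z within cball 0 1)"
      by (simp add: continuous_within)
    then show ?thesis by (rule tendsto_within_subset) (rule ball_subset_cball)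
  qed
next
  have "(\<lambda>z. z ^ m * \<phi> z) holomorphic_on ball 0 1 - {0}"
    by (rule holomorphic_on_mult[OF holomorphic_on_power[OF holomorphic_on_ident] holo])
  then show "h holomorphic_on ball 0 1 - {0}"
    by (rule holomorphic_transform) (simp add: h_def)
qed simp_all

theorem proposition3:
  fixes \<phi> :: "complex \<Rightarrow> complex"
  assumes "continuous_on (cball 0 1 - {0}) \<phi>"
    and "\<phi> holomorphic_on (ball 0 1 - {0})"
    and "is_pole \<phi> 0 \<or> (\<exists>l. (\<phi> \<longlongrightarrow> l) (at 0))"
  shows "(\<lambda>\<zeta>. (\<zeta>, \<phi> \<zeta>)) ` (cball 0 1 - {0})
           \<subseteq> proj_hull ((\<lambda>\<zeta>. (\<zeta>, \<phi> \<zeta>)) ` sphere 0 1)"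
proof -
  note cont = assms(1) and holo = assms(2)
  obtain m L where lim: "((\<lambda>z. z ^ m * \<phi> z) \<longlongrightarrow> L) (at 0)"
  proof (cases "is_pole \<phi> 0")
    case True
    have c0: "(0::complex) \<in> ball 0 1" by simp
    have ex: "\<exists>r. r>0 \<and> cball (0::complex) r \<subseteq> ball 0 1 \<and> zor_poly \<phi> 0 holomorphic_on cball 0 r
      \<and> (\<forall>w\<in>cball 0 r - {0}. \<phi> w = zor_poly \<phi> 0 w / (w-0) ^ nat (- zorder \<phi> 0)
      \<and> zor_poly \<phi> 0 w \<noteq> 0)"
      by (rule conjunct2[OF conjunct2[OF zorder_exist_pole[OF holo open_ball c0 True]]])
    then obtain r where r: "r > 0" "zor_poly \<phi> 0 holomorphic_on cball 0 r"
      "\<forall>w\<in>cball 0 r - {0}. \<phi> w = zor_poly \<phi> 0 w / (w - 0) ^ nat (- zorder \<phi> 0)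
      \<and> zor_poly \<phi> 0 w \<noteq> 0"
      by (elim exE conjE) blast
    define g where "g = zor_poly \<phi> 0"
    define m where "m = nat (- zorder \<phi> 0)"
    have "continuous_on (cball 0 r) g"
      using r(2) unfolding g_def by (rule holomorphic_on_imp_continuous_on)
    moreover have "0 \<in> interior (cball (0::complex) r)" using r(1) by simp
    ultimately have "isCont g 0"
      by (rule continuous_on_interior)
    then have gl: "(g \<longlongrightarrow> g 0) (at 0)" by (simp add: isCont_def)
    have "\<forall>z. z \<noteq> 0 \<and> dist z 0 < r \<longrightarrow> g z = z ^ m * \<phi> z"
    proof (intro allI impI)
      fix z :: complex assume z: "z \<noteq> 0 \<and> dist z 0 < r"
      then have "z \<in> cball 0 r - {0}" by (simp add: dist_commute)
      then have "\<phi> z = g z / z ^ m" using r(3) unfolding g_def m_def by simp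
      then show "g z = z ^ m * \<phi> z" using z by simp
    qed
    then have "eventually (\<lambda>z. g z = z ^ m * \<phi> z) (at 0)"
      unfolding eventually_at using r(1) by blast
    then have "((\<lambda>z. z ^ m * \<phi> z) \<longlongrightarrow> g 0) (at 0)"
      using gl by (rule tendsto_cong[THEN iffD1])
    then show ?thesis by (rule that)
  next
    case False
    then obtain l where "(\<phi> \<longlongrightarrow> l) (at 0)" using assms(3) by auto
    then have "((\<lambda>z. z ^ 0 * \<phi> z) \<longlongrightarrow> l) (at 0)" by simp
    then show ?thesis by (rule that)
  qed
  define h where "h = (\<lambda>z. if z = 0 then L else z ^ m * \<phi> z)"
  have hc: "continuous_on (cball 0 1) h"
    unfolding h_def by (rule ext_cont[OF cont lim])
  have hh: "h holomorphic_on ball 0 1"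
    unfolding h_def by (rule ext_holo[OF cont holo lim])
  show ?thesis
  proof
    fix x assume "x \<in> (\<lambda>\<zeta>. (\<zeta>, \<phi> \<zeta>)) ` (cball 0 1 - {0})"
    then obtain z0 where z0': "z0 \<in> cball 0 1 - {0}" and x: "x = (z0, \<phi> z0)" by blast
    then have z0: "z0 \<in> cball 0 1" "z0 \<noteq> 0" by auto
    have nz0: "norm z0 > 0" using z0 by simp
    show "x \<in> proj_hull ((\<lambda>\<zeta>. (\<zeta>, \<phi> \<zeta>)) ` sphere 0 1)"
      unfolding proj_hull_def
    proof (intro CollectI exI[of _ "(1 / norm z0) ^ m"] allI ballI)
      fix d P assume "P \<in> polys2 d"
      then obtain c where P: "P = (\<lambda>(z, w). \<Sum>i\<le>d. \<Sum>j\<le>d - i. c i j * z ^ i * w ^ j)"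
        unfolding polys2_def by blast
      define G where "G = (\<lambda>z. \<Sum>i\<le>d. \<Sum>j\<le>d - i. c i j * z ^ (i + m * (d - j)) * h z ^ j)"
      have Geq: "G z = z ^ (m * d) * P (z, \<phi> z)" if "z \<noteq> 0" for z
      proof -
        have "G z = (\<Sum>i\<le>d. \<Sum>j\<le>d - i. z ^ (m * d) * (c i j * z ^ i * \<phi> z ^ j))"
          unfolding G_def
        proof (intro sum.cong refl)
          fix i j assume j: "j \<in> {..d - i}"
          have jd: "j \<le> d" using j by auto
          have e: "m * d = m * (d - j) + m * j"
            using jd by (metis add_mult_distrib2 le_add_diff_inverse2)
          have e2: "z ^ (m * d) = z ^ (m * (d - j)) * (z ^ m) ^ j"
            by (subst e) (simp only: power_add power_mult)
          have hz: "h z ^ j = (z ^ m) ^ j * \<phi> z ^ j"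
            using that by (simp add: h_def power_mult_distrib)
          show "c i j * z ^ (i + m * (d - j)) * h z ^ j = z ^ (m * d) * (c i j * z ^ i * \<phi> z ^ j)"
            unfolding hz e2 power_add by (simp only: mult_ac)
        qed
        also have "\<dots> = z ^ (m * d) * P (z, \<phi> z)"
          by (simp add: P sum_distrib_left)
        finally show ?thesis .
      qed
      have Gc: "continuous_on (cball 0 1) G"
        unfolding G_def by (intro continuous_on_sum continuous_on_mult continuous_on_const
            continuous_on_power continuous_on_id hc)
      have Gh: "G holomorphic_on ball 0 1"
        unfolding G_def by (intro holomorphic_on_sum holomorphic_on_mult holomorphic_on_const
            holomorphic_on_power holomorphic_on_ident hh)
      have Gs: "norm (G z) = norm (P (z, \<phi> z))" if "z \<in> sphere 0 1" for z
      proof -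
        have "z \<noteq> 0" using that by auto
        then show ?thesis using Geq[of z] that by (simp add: norm_mult norm_power)
      qed
      have "compact ((\<lambda>z. norm (G z)) ` sphere 0 1)"
        by (rule compact_continuous_image[OF continuous_on_norm[OF continuous_on_subset[OF Gc]]])
           (auto simp: compact_sphere)
      then have "bdd_above ((\<lambda>z. norm (G z)) ` sphere 0 1)"
        by (simp add: bounded_imp_bdd_above compact_imp_bounded)
      then have bdd: "bdd_above ((\<lambda>y. norm (P y)) ` (\<lambda>\<zeta>. (\<zeta>, \<phi> \<zeta>)) ` sphere 0 1)"
      proof -
        have "(\<lambda>y. norm (P y)) ` (\<lambda>\<zeta>. (\<zeta>, \<phi> \<zeta>)) ` sphere 0 1 = (\<lambda>z. norm (G z)) ` sphere 0 1"
          unfolding image_image by (rule image_cong) (simp_all add: Gs)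
        then show ?thesis using \<open>bdd_above ((\<lambda>z. norm (G z)) ` sphere 0 1)\<close> by simp
      qed
      define B where "B = (SUP y\<in>(\<lambda>\<zeta>. (\<zeta>, \<phi> \<zeta>)) ` sphere 0 1. norm (P y))"
      have "norm (G z0) \<le> B"
      proof (rule maximum_modulus_frontier[of G "cball 0 1"])
        fix z assume "z \<in> frontier (cball (0::complex) 1)"
        then have z: "z \<in> sphere 0 1" by simp
        have "norm (G z) = norm (P (z, \<phi> z))" using Gs[OF z] .
        also have "\<dots> \<le> B" unfolding B_def
          by (rule cSUP_upper[OF _ bdd]) (use z in auto)
        finally show "norm (G z) \<le> B" .
      qed (use Gc Gh z0 in auto)
      then have "norm z0 ^ (m * d) * norm (P x) \<le> B"
        using Geq[OF z0(2)] x by (simp add: norm_mult norm_power)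
      then have "norm (P x) \<le> B / norm z0 ^ (m * d)"
        using nz0 by (simp add: field_simps)
      also have "\<dots> = ((1 / norm z0) ^ m) ^ d * B"
        by (simp add: power_mult power_divide)
      finally show "norm (P x) \<le> ((1 / norm z0) ^ m) ^ d * B" .
    qed
  qed
qed

end
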